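(* Let $1<p<\infty$ and let $f\in L_1([-\pi,\pi])$ have Fourier series $\sum_{k\in\mathbb Z}a_ke^{ikx}$ (no monotonicity assumption). Then $$J_p^*(f)\lesssim I_p(f),$$ with a constant depending only on $p$.
   Context: $p'=p/(p-1)$; $a_k=\frac1{2\pi}\int_{-\pi}^\pi f(x)e^{-ikx}dx$. Put $|\Delta a_k|=|a_k-a_{k+1}|$ for $k>0$, $|\Delta a_k|=|a_k-a_{k-1}|$ for $k<0$, $|\Delta a_0|=|a_0-a_1|+|a_0-a_{-1}|$; $\Theta_k(f)=\sum_{[2^{k-1}]\le|m|<2^k}|\Delta a_m|$ for $k\ge0$ ($[\cdot]$ the floor function), and $I_p(f)=\big(\sum_{k=0}^\infty(2^{k/p'}\Theta_k(f))^p\big)^{1/p}$. Let $\{a_k^*\}_{k\in\mathbb Z}$ be the symmetric nonincreasing rearrangement of $\{|a_k|\}$, i.e. the values $|a_k|$ rearranged nonincreasingly and placed so that $a_0^*\ge a_{-1}^*\ge a_1^*\ge a_{-2}^*\ge a_2^*\ge\cdots$, and $J_p^*(f)=\big(\sum_{k\in\mathbb Z}(|k|+1)^{p-2}(a_k^* )^p\big)^{1/p}$. *)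

theory Defs
  imports "HOL-Analysis.Analysis"
begin

definition fourier_coeff :: "(real \<Rightarrow> complex) \<Rightarrow> int \<Rightarrow> complex" where
  "fourier_coeff f k = (1 / (2 * pi)) *
     set_lebesgue_integral lborel {-pi..pi} (\<lambda>x. f x * exp (- \<i> * of_int k * of_real x))"

definition delta_coeff :: "(int \<Rightarrow> complex) \<Rightarrow> int \<Rightarrow> real" where
  "delta_coeff a k =
     (if k > 0 then cmod (a k - a (k + 1))
      else if k < 0 then cmod (a k - a (k - 1))
      else cmod (a 0 - a 1) + cmod (a 0 - a (-1)))"

text \<open>Theta_k: sum over floor(2^(k-1)) <= |m| < 2^k; note floor(2^(k-1)) = 2^k div 2.\<close>
definition Theta :: "(int \<Rightarrow> complex) \<Rightarrow> nat \<Rightarrow> real" where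
  "Theta a k = (\<Sum>m\<in>{m::int. (2::int)^k div 2 \<le> \<bar>m\<bar> \<and> \<bar>m\<bar> < 2^k}. delta_coeff a m)"

definition conj_exp :: "real \<Rightarrow> real" where
  "conj_exp p = p / (p - 1)"

definition lp_root :: "real \<Rightarrow> (nat \<Rightarrow> real) \<Rightarrow> ennreal" where
  "lp_root p g = (if summable g then ennreal ((\<Sum>n. g n) powr (1 / p)) else top)"

definition I_p :: "real \<Rightarrow> (real \<Rightarrow> complex) \<Rightarrow> ennreal" where
  "I_p p f = lp_root p (\<lambda>k. (2 powr (real k / conj_exp p) * Theta (fourier_coeff f) k) powr p)"

text \<open>n-th largest value (n = 0,1,2,...) of the family |a_k|, via the distribution function.\<close>
definition decr_rearr :: "(int \<Rightarrow> real) \<Rightarrow> nat \<Rightarrow> real" where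
  "decr_rearr b n = Inf {t. t \<ge> 0 \<and> finite {k. b k > t} \<and> card {k. b k > t} \<le> n}"

definition sym_index :: "nat \<Rightarrow> int" where
  "sym_index n = (if even n then int (n div 2) else - int ((n + 1) div 2))"

definition sym_rearr :: "(int \<Rightarrow> complex) \<Rightarrow> int \<Rightarrow> real" where
  "sym_rearr a k = decr_rearr (\<lambda>j. cmod (a j)) (THE n. sym_index n = k)"

definition J_p_star :: "real \<Rightarrow> (real \<Rightarrow> complex) \<Rightarrow> ennreal" where
  "J_p_star p f = lp_root p (\<lambda>n. let k = sym_index n in
      (real_of_int (\<bar>k\<bar> + 1)) powr (p - 2) * (sym_rearr (fourier_coeff f) k) powr p)"

end

theory Submission
  imports Defs
begin

definition Qs :: "(int \<Rightarrow> complex) \<Rightarrow> nat \<Rightarrow> real" where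
  "Qs a n = (\<Sum>m\<in>{m::int. \<bar>m\<bar> < int n}. delta_coeff a m)"

lemma Qset_eq: "{m::int. \<bar>m\<bar> < int n} = {- int n<..<int n}"
  by auto

lemma Qset_finite[simp]: "finite {m::int. \<bar>m\<bar> < c}"
proof -
  have "{m::int. \<bar>m\<bar> < c} = {- c<..<c}" by auto
  then show ?thesis by simp
qed

lemma delta_nonneg: "0 \<le> delta_coeff a m"
  by (simp add: delta_coeff_def)

lemma Theta_nonneg: "0 \<le> Theta a k"
  unfolding Theta_def by (intro sum_nonneg delta_nonneg)

lemma Qs_mono: "n \<le> n' \<Longrightarrow> Qs a n \<le> Qs a n'"
  unfolding Qs_def by (rule sum_mono2) (auto simp: delta_nonneg)

lemma Theta_partial: "(\<Sum>i<j. Theta a i) = Qs a (2^j div 2)"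
proof (induction j)
  case 0
  then show ?case by (simp add: Qs_def)
next
  case (Suc j)
  have fin: "finite {m::int. (2::int)^j div 2 \<le> \<bar>m\<bar> \<and> \<bar>m\<bar> < 2^j}"
    by (rule finite_subset[of _ "{m::int. \<bar>m\<bar> < int (2^j)}"]) auto
  have e: "{m::int. \<bar>m\<bar> < int (2^Suc j div 2)} =
     {m::int. \<bar>m\<bar> < int (2^j div 2)} \<union> {m::int. (2::int)^j div 2 \<le> \<bar>m\<bar> \<and> \<bar>m\<bar> < 2^j}"
    by (auto simp: zdiv_int)
  have "Qs a (2^Suc j div 2) = Qs a (2^j div 2) + Theta a j"
    unfolding Qs_def Theta_def e
    by (subst sum.union_disjoint) (auto simp: fin zdiv_int)
  then show ?case using Suc by simp
qed

lemma Qs_step: "Qs a n + delta_coeff a (int n) \<le> Qs a (Suc n)"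
proof -
  have "Qs a n + delta_coeff a (int n) = (\<Sum>m\<in>insert (int n) {m::int. \<bar>m\<bar> < int n}. delta_coeff a m)"
    unfolding Qs_def by (subst sum.insert) auto
  also have "\<dots> \<le> Qs a (Suc n)"
    unfolding Qs_def by (rule sum_mono2) (auto simp: delta_nonneg)
  finally show ?thesis .
qed

lemma delta_ge: "cmod (a (int n) - a (int n + 1)) \<le> delta_coeff a (int n)"
  by (cases "n = 0") (auto simp: delta_coeff_def)

lemma coeff_diff_bound:
  assumes "k \<le> M"
  shows "cmod (a (int M) - a (int k)) \<le> Qs a M - Qs a k"
  using assms
proof (induction M)
  case 0
  then show ?case by simp
next
  case (Suc M)
  show ?case
  proof (cases "k = Suc M")
    case True
    then show ?thesis by simp
  next
    case False
    then have IH: "cmod (a (int M) - a (int k)) \<le> Qs a M - Qs a k" using Suc by simp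
    have eq: "a (int (Suc M)) - a (int k) = (a (int M) - a (int k)) - (a (int M) - a (int M + 1))"
      by (simp add: add.commute)
    have "cmod (a (int (Suc M)) - a (int k)) \<le> cmod (a (int M) - a (int M + 1)) + cmod (a (int M) - a (int k))"
      unfolding eq using norm_triangle_ineq4[of "a (int M) - a (int k)" "a (int M) - a (int M + 1)"] by simp
    also have "\<dots> \<le> delta_coeff a (int M) + (Qs a M - Qs a k)"
      using IH delta_ge[of a M] by simp
    also have "\<dots> \<le> Qs a (Suc M) - Qs a k" using Qs_step[of a M] by simp
    finally show ?thesis .
  qed
qed

lemma delta_reflect: "delta_coeff (\<lambda>m. a (- m)) m = delta_coeff a (- m)"
  unfolding delta_coeff_def
  by (auto simp: algebra_simps) (metis diff_conv_add_uminus add.commute)+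

lemma Qs_reflect: "Qs (\<lambda>m. a (- m)) n = Qs a n"
  unfolding Qs_def delta_reflect
  by (rule sum.reindex_bij_witness[of _ uminus uminus]) auto

lemma geom_avg_tendsto:
  fixes c :: complex
  assumes "norm c = 1" "c \<noteq> 1"
  shows "(\<lambda>L. (\<Sum>j<L. c ^ j) / of_nat L) \<longlonglongrightarrow> 0"
proof (rule Lim_null_comparison)
  have "norm (1 - c) > 0" using assms by simp
  show "\<forall>\<^sub>F L in sequentially. norm ((\<Sum>j<L. c ^ j) / of_nat L) \<le> (2 / norm (1 - c)) / real L"
  proof (intro always_eventually allI)
    fix L :: nat
    have "norm (\<Sum>j<L. c ^ j) = norm (1 - c ^ L) / norm (1 - c)"
      using assms by (simp add: sum_gp_strict norm_divide)
    also have "\<dots> \<le> 2 / norm (1 - c)"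
    proof (rule divide_right_mono)
      have "norm (1 - c ^ L) \<le> norm (1::complex) + norm (c ^ L)" by (rule norm_triangle_ineq4)
      also have "\<dots> = 2" using assms by (simp add: norm_power)
      finally show "norm (1 - c ^ L) \<le> 2" .
    qed simp
    finally have "norm (\<Sum>j<L. c ^ j) \<le> 2 / norm (1 - c)" .
    moreover have "norm ((\<Sum>j<L. c ^ j) / of_nat L) = norm (\<Sum>j<L. c ^ j) / real L"
      by (simp add: norm_divide)
    ultimately show "norm ((\<Sum>j<L. c ^ j) / of_nat L) \<le> (2 / norm (1 - c)) / real L"
      by (metis divide_right_mono of_nat_0_le_iff)
  qed
  show "(\<lambda>L. (2 / norm (1 - c)) / real L) \<longlonglongrightarrow> 0"
    by (intro tendsto_divide_0[OF tendsto_const] filterlim_at_top_imp_at_infinity[OF filterlim_real_sequentially])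
qed

lemma exp_ne_1:
  fixes x :: real
  assumes "x \<in> {-pi..pi}" "x \<noteq> 0"
  shows "exp (\<i> * of_real x) \<noteq> 1"
proof
  assume "exp (\<i> * of_real x) = 1"
  then obtain n :: int where n: "x = 2 * pi * of_int n"
    by (auto simp: exp_eq_1)
  have "n \<noteq> 0" using n assms by auto
  then have "\<bar>of_int n\<bar> \<ge> (1::real)" by linarith
  then have "\<bar>x\<bar> \<ge> 2 * pi" using n by (simp add: abs_mult)
  then show False using assms pi_gt_zero by auto
qed

lemma avg_integral_tendsto:
  fixes G :: "real \<Rightarrow> complex" and s :: real
  assumes G: "integrable lborel G" and supp: "\<And>x. x \<notin> {-pi..pi} \<Longrightarrow> G x = 0"
    and s: "s = 1 \<or> s = -1"
  shows "(\<lambda>L. integral\<^sup>L lborel (\<lambda>x. G x * ((\<Sum>j<L. exp (\<i> * of_real (s * x)) ^ j) / of_nat L)))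
           \<longlonglongrightarrow> 0"
proof -
  define S where "S = (\<lambda>(L::nat) x. G x * ((\<Sum>j<L. exp (\<i> * of_real (s * x)) ^ j) / of_nat L))"
  have Gm: "G \<in> borel_measurable lborel" using G by (rule borel_measurable_integrable)
  have m0: "(\<lambda>x. 0::complex) \<in> borel_measurable lborel" by simp
  have iw: "integrable lborel (\<lambda>x. norm (G x))" using G by simp
  have mS: "\<And>L. S L \<in> borel_measurable lborel"
      unfolding S_def using Gm by measurable
  have bS: "\<And>L. AE x in lborel. norm (S L x) \<le> norm (G x)"
  proof (intro AE_I2)
      fix x :: real and L :: nat
      have "norm (\<Sum>j<L. exp (\<i> * of_real (s * x)) ^ j) \<le> (\<Sum>j<L. norm (exp (\<i> * of_real (s * x)) ^ j))"
        by (rule norm_sum)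
      also have "\<dots> = real L" by (simp add: norm_power)
      finally have "norm ((\<Sum>j<L. exp (\<i> * of_real (s * x)) ^ j) / of_nat L) \<le> 1"
        by (cases "L = 0") (auto simp: norm_divide field_simps)
      then have "norm (G x) * norm ((\<Sum>j<L. exp (\<i> * of_real (s * x)) ^ j) / of_nat L) \<le> norm (G x)"
        by (rule mult_left_le) simp
      then show "norm (S L x) \<le> norm (G x)"
        unfolding S_def norm_mult .
  qed
  have lS: "AE x in lborel. (\<lambda>L. S L x) \<longlonglongrightarrow> 0"
      using AE_lborel_singleton[of "0::real"]
  proof eventually_elim
      case (elim x)
      show ?case
      proof (cases "x \<in> {-pi..pi}")
        case True
        have "s * x \<in> {-pi..pi}" "s * x \<noteq> 0" using True elim s by auto
        then have "exp (\<i> * of_real (s * x)) \<noteq> 1" by (rule exp_ne_1)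
        moreover have "norm (exp (\<i> * of_real (s * x))) = 1" by simp
        ultimately show ?thesis
          unfolding S_def using geom_avg_tendsto by (intro tendsto_mult_right_zero) auto
      next
        case False
        then show ?thesis using supp by (simp add: S_def)
      qed
  qed
  note lim = Bochner_Integration.integral_dominated_convergence[OF m0 mS iw lS bS]
  then show ?thesis by (simp add: S_def)
qed

lemma exp_shift:
  fixes x :: real and N s :: int and j :: nat
  shows "exp (- \<i> * of_int (N + s * int j) * of_real x) =
         exp (- \<i> * of_int N * of_real x) * exp (\<i> * of_real ((- real_of_int s) * x)) ^ j"
proof -
  have e1: "exp (\<i> * of_real ((- real_of_int s) * x)) ^ j = exp (of_nat j * (\<i> * of_real ((- real_of_int s) * x)))"
    by (rule exp_of_nat_mult[symmetric])
  have e2: "exp (- \<i> * of_int N * of_real x) * exp (of_nat j * (\<i> * of_real ((- real_of_int s) * x)))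
     = exp (- \<i> * of_int N * of_real x + of_nat j * (\<i> * of_real ((- real_of_int s) * x)))"
    by (rule exp_add[symmetric])
  have e3: "- \<i> * of_int N * of_real x + of_nat j * (\<i> * of_real ((- real_of_int s) * x))
      = - \<i> * of_int (N + s * int j) * of_real x"
    by (simp add: algebra_simps)
  show ?thesis unfolding e1 e2 e3 by (rule refl)
qed

lemma fc_avg_tendsto:
  fixes f :: "real \<Rightarrow> complex" and N s :: int
  assumes f: "set_integrable lborel {-pi..pi} f" and s: "s = 1 \<or> s = -1"
  shows "(\<lambda>L. (\<Sum>j<L. fourier_coeff f (N + s * int j)) / of_nat L) \<longlonglongrightarrow> 0"
proof -
  define F where "F x = indicator {-pi..pi} x *\<^sub>R f x" for x
  define G where "G x = F x * exp (- \<i> * of_int N * of_real x)" for x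
  define s' where "s' = - real_of_int s"
  define E where "E j x = exp (\<i> * of_real (s' * x)) ^ j" for j :: nat and x :: real
  have Fi: "integrable lborel F" using f unfolding F_def set_integrable_def .
  have Fm: "F \<in> borel_measurable lborel" using Fi by (rule borel_measurable_integrable)
  have Gm: "G \<in> borel_measurable lborel" unfolding G_def using Fm by measurable
  have Gi: "integrable lborel G"
    by (rule Bochner_Integration.integrable_bound[OF Fi Gm]) (auto simp: G_def norm_mult)
  have supp: "\<And>x. x \<notin> {-pi..pi} \<Longrightarrow> G x = 0" by (simp add: G_def F_def)
  have s'': "s' = 1 \<or> s' = -1" using s by (auto simp: s'_def)
  have GEi: "integrable lborel (\<lambda>x. G x * E j x)" for j
  proof (rule Bochner_Integration.integrable_bound[OF Gi])
    show "(\<lambda>x. G x * E j x) \<in> borel_measurable lborel" unfolding E_def using Gm by measurable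
    show "AE x in lborel. norm (G x * E j x) \<le> norm (G x)"
      by (auto simp: E_def norm_mult norm_power)
  qed
  have coef: "fourier_coeff f (N + s * int j) = (1 / (2 * pi)) * integral\<^sup>L lborel (\<lambda>x. G x * E j x)" for j
  proof -
    have "\<And>x. indicator {-pi..pi} x *\<^sub>R (f x * exp (- \<i> * of_int (N + s * int j) * of_real x)) = G x * E j x"
      unfolding exp_shift[of N s j] by (simp add: G_def F_def E_def s'_def mult.assoc)
    then show ?thesis
      unfolding fourier_coeff_def set_lebesgue_integral_def by simp
  qed
  have avg: "(\<Sum>j<L. fourier_coeff f (N + s * int j)) / of_nat L
      = (1 / (2 * pi)) * integral\<^sup>L lborel (\<lambda>x. G x * ((\<Sum>j<L. exp (\<i> * of_real (s' * x)) ^ j) / of_nat L))" for L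
  proof -
    have "integral\<^sup>L lborel (\<lambda>x. G x * ((\<Sum>j<L. exp (\<i> * of_real (s' * x)) ^ j) / of_nat L))
        = integral\<^sup>L lborel (\<lambda>x. (\<Sum>j<L. G x * E j x) / of_nat L)"
      by (simp add: E_def sum_distrib_left)
    also have "\<dots> = (\<Sum>j<L. integral\<^sup>L lborel (\<lambda>x. G x * E j x)) / of_nat L"
      by (simp add: Bochner_Integration.integral_sum[OF GEi])
    finally have X: "integral\<^sup>L lborel (\<lambda>x. G x * ((\<Sum>j<L. exp (\<i> * of_real (s' * x)) ^ j) / of_nat L))
        = (\<Sum>j<L. integral\<^sup>L lborel (\<lambda>x. G x * E j x)) / of_nat L" .
    show ?thesis unfolding X coef sum_distrib_left[symmetric] by (simp only: times_divide_eq_right)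
  qed
  have "(\<lambda>L. (1 / (2 * pi)) * integral\<^sup>L lborel (\<lambda>x. G x * ((\<Sum>j<L. exp (\<i> * of_real (s' * x)) ^ j) / of_nat L)))
     \<longlonglongrightarrow> 0"
    by (rule tendsto_mult_right_zero[OF avg_integral_tendsto[OF Gi supp s'']])
  then show ?thesis unfolding avg .
qed

lemma abstract_bound:
  fixes a :: "int \<Rightarrow> complex" and N :: nat and D :: real
  assumes avg: "(\<lambda>L. (\<Sum>j<L. a (int N + int j)) / of_nat L) \<longlonglongrightarrow> 0"
    and diff: "\<And>j. cmod (a (int N + int j) - a (int N)) \<le> D"
  shows "cmod (a (int N)) \<le> D"
proof -
  have lim: "(\<lambda>L. D + cmod ((\<Sum>j<L. a (int N + int j)) / of_nat L)) \<longlonglongrightarrow> D + 0"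
    by (intro tendsto_add tendsto_const tendsto_norm_zero avg)
  have "cmod (a (int N)) \<le> D + cmod ((\<Sum>j<L. a (int N + int j)) / of_nat L)" if L: "L \<ge> 1" for L
  proof -
    have Lpos: "(of_nat L :: complex) \<noteq> 0" using L by simp
    have "a (int N) = (\<Sum>j<L. (a (int N) - a (int N + int j))) / of_nat L + (\<Sum>j<L. a (int N + int j)) / of_nat L"
      using Lpos by (simp add: sum_subtractf field_simps)
    then have "cmod (a (int N)) \<le> cmod ((\<Sum>j<L. (a (int N) - a (int N + int j))) / of_nat L) + cmod ((\<Sum>j<L. a (int N + int j)) / of_nat L)"
      by (metis norm_triangle_ineq)
    moreover have "cmod ((\<Sum>j<L. (a (int N) - a (int N + int j))) / of_nat L) \<le> D"
    proof -
      have "cmod (\<Sum>j<L. (a (int N) - a (int N + int j))) \<le> (\<Sum>j<L. cmod (a (int N) - a (int N + int j)))"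
        by (rule norm_sum)
      also have "\<dots> \<le> (\<Sum>j<L. D)"
        by (rule sum_mono) (metis diff norm_minus_commute)
      also have "\<dots> = real L * D" by simp
      finally show ?thesis using L by (simp add: norm_divide field_simps)
    qed
    ultimately show ?thesis by simp
  qed
  then show ?thesis
    by (intro LIMSEQ_le_const[OF lim[simplified]]) auto
qed

lemma coeff_bound:
  fixes f :: "real \<Rightarrow> complex" and Tot :: real
  assumes f: "set_integrable lborel {-pi..pi} f"
    and Tot: "\<And>n. Qs (fourier_coeff f) n \<le> Tot"
  shows "cmod (fourier_coeff f k) \<le> Tot - Qs (fourier_coeff f) (nat \<bar>k\<bar>)"
proof (cases "k \<ge> 0")
  case True
  define a where "a = fourier_coeff f"
  define N where "N = nat k"
  have k: "k = int N" using True by (simp add: N_def)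
  have "cmod (a (int N)) \<le> Tot - Qs a N"
  proof (rule abstract_bound)
    show "(\<lambda>L. (\<Sum>j<L. a (int N + int j)) / of_nat L) \<longlonglongrightarrow> 0"
      using fc_avg_tendsto[OF f, of 1 "int N"] by (simp add: a_def)
    fix j
    have "cmod (a (int (N + j)) - a (int N)) \<le> Qs a (N + j) - Qs a N"
      by (rule coeff_diff_bound) simp
    then show "cmod (a (int N + int j) - a (int N)) \<le> Tot - Qs a N"
      using Tot[of "N + j"] by (simp add: a_def)
  qed
  then show ?thesis by (simp add: a_def k)
next
  case False
  define a where "a = (\<lambda>m. fourier_coeff f (- m))"
  define N where "N = nat (- k)"
  have k: "k = - int N" using False by (simp add: N_def)
  have Qa: "Qs a n = Qs (fourier_coeff f) n" for n unfolding a_def by (rule Qs_reflect)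
  have "cmod (a (int N)) \<le> Tot - Qs a N"
  proof (rule abstract_bound)
    show "(\<lambda>L. (\<Sum>j<L. a (int N + int j)) / of_nat L) \<longlonglongrightarrow> 0"
      using fc_avg_tendsto[OF f, of "-1" "- int N"] by (simp add: a_def)
    fix j
    have "cmod (a (int (N + j)) - a (int N)) \<le> Qs a (N + j) - Qs a N"
      by (rule coeff_diff_bound) simp
    then show "cmod (a (int N + int j) - a (int N)) \<le> Tot - Qs a N"
      using Tot[of "N + j"] by (simp add: Qa)
  qed
  then have "cmod (a (int N)) \<le> Tot - Qs (fourier_coeff f) N" by (simp only: Qa)
  then show ?thesis by (simp add: a_def k)
qed

lemma decr_rearr_bound:
  fixes b :: "int \<Rightarrow> real" and B :: "nat \<Rightarrow> real" and n m :: nat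
  assumes bB: "\<And>k. b k \<le> B (nat \<bar>k\<bar>)" and Bmono: "\<And>m m'. m \<le> m' \<Longrightarrow> B m' \<le> B m"
    and Bnn: "\<And>m. 0 \<le> B m" and nm: "2 * m \<le> n + 1"
  shows "0 \<le> decr_rearr b n \<and> decr_rearr b n \<le> B m"
proof -
  define T where "T = {t. t \<ge> 0 \<and> finite {k. b k > t} \<and> card {k. b k > t} \<le> n}"
  have sub: "{k. b k > B m} \<subseteq> {- int m<..<int m}"
  proof
    fix k assume "k \<in> {k. b k > B m}"
    then have "b k > B m" by simp
    then have "\<not> m \<le> nat \<bar>k\<bar>" using bB[of k] Bmono[of m "nat \<bar>k\<bar>"] by linarith
    then show "k \<in> {- int m<..<int m}" by auto
  qed
  have fin: "finite {k. b k > B m}" by (rule finite_subset[OF sub]) simp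
  have "card {k. b k > B m} \<le> card {- int m<..<int m}" by (rule card_mono[OF _ sub]) simp
  also have "\<dots> \<le> n" using nm by simp
  finally have "B m \<in> T" using fin Bnn[of m] by (simp add: T_def)
  moreover have "bdd_below T" unfolding T_def by (rule bdd_belowI[of _ 0]) auto
  ultimately have "Inf T \<le> B m" by (rule cInf_lower)
  moreover have "0 \<le> Inf T" using \<open>B m \<in> T\<close> by (intro cInf_greatest) (auto simp: T_def)
  ultimately show ?thesis by (simp add: decr_rearr_def T_def)
qed

lemma sym_index_inj: "sym_index n = sym_index n' \<Longrightarrow> n = n'"
  unfolding sym_index_def by (auto split: if_splits) presburger

lemma sym_index_abs: "\<bar>sym_index n\<bar> = int ((n + 1) div 2)"
  unfolding sym_index_def by auto

lemma sym_rearr_index: "sym_rearr a (sym_index n) = decr_rearr (\<lambda>j. cmod (a j)) n"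
proof -
  have "(THE n'. sym_index n' = sym_index n) = n"
    by (rule the_equality) (auto dest: sym_index_inj)
  then show ?thesis by (simp add: sym_rearr_def)
qed

lemma jensen_fin:
  fixes w x :: "'a \<Rightarrow> real" and p :: real
  assumes S: "finite S" and w: "\<And>d. d \<in> S \<Longrightarrow> 0 \<le> w d" and x: "\<And>d. d \<in> S \<Longrightarrow> 0 \<le> x d"
    and W1: "sum w S \<le> 1" and p: "1 \<le> p"
  shows "(\<Sum>d\<in>S. w d * x d) powr p \<le> (\<Sum>d\<in>S. w d * x d powr p)"
proof -
  define S' where "S' = {d\<in>S. w d > 0 \<and> x d > 0}"
  have fS': "finite S'" using S by (simp add: S'_def)
  have S'S: "S' \<subseteq> S" by (auto simp: S'_def)
  have zero: "w d * x d = 0" if "d \<in> S - S'" for d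
  proof -
    have "w d = 0 \<or> x d = 0" using that w[of d] x[of d] by (auto simp: S'_def)
    then show ?thesis by auto
  qed
  have e1: "(\<Sum>d\<in>S. w d * x d) = (\<Sum>d\<in>S'. w d * x d)"
    by (rule sum.mono_neutral_right[OF S S'S]) (use zero in auto)
  have e2: "(\<Sum>d\<in>S'. w d * x d powr p) \<le> (\<Sum>d\<in>S. w d * x d powr p)"
    by (rule sum_mono2[OF S S'S]) (use w in auto)
  show ?thesis
  proof (cases "S' = {}")
    case True
    then show ?thesis unfolding e1 using w by (auto intro!: sum_nonneg)
  next
    case False
    define W where "W = sum w S'"
    have Wpos: "W > 0" unfolding W_def using False fS' by (intro sum_pos) (auto simp: S'_def)
    have W1': "W \<le> 1" unfolding W_def using sum_mono2[OF S S'S, of w] w W1 by auto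
    have conv: "(\<Sum>d\<in>S'. (w d / W) *\<^sub>R x d) powr p \<le> (\<Sum>d\<in>S'. (w d / W) * x d powr p)"
    proof (rule convex_on_sum[OF fS' False powr_convex[OF p]])
      show "(\<Sum>d\<in>S'. w d / W) = 1" using Wpos by (simp add: W_def sum_divide_distrib[symmetric])
      show "\<And>i. i \<in> S' \<Longrightarrow> 0 \<le> w i / W" using Wpos by (auto simp: S'_def)
      show "\<And>i. i \<in> S' \<Longrightarrow> x i \<in> {0<..}" by (auto simp: S'_def)
    qed
    have A: "(\<Sum>d\<in>S'. w d * x d) = W * (\<Sum>d\<in>S'. (w d / W) *\<^sub>R x d)"
      using Wpos by (simp add: sum_distrib_left)
    have B: "W * (\<Sum>d\<in>S'. (w d / W) * x d powr p) = (\<Sum>d\<in>S'. w d * x d powr p)"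
      using Wpos by (simp add: sum_distrib_left)
    have "(\<Sum>d\<in>S. w d * x d) powr p = W powr p * (\<Sum>d\<in>S'. (w d / W) *\<^sub>R x d) powr p"
      unfolding e1 A by (rule powr_mult)
    also have "\<dots> \<le> W powr p * (\<Sum>d\<in>S'. (w d / W) * x d powr p)"
      by (rule mult_left_mono[OF conv]) simp
    also have "W powr p = W powr (p - 1) * W"
      using Wpos by (simp add: powr_diff powr_one)
    also have "W powr (p - 1) * W * (\<Sum>d\<in>S'. (w d / W) * x d powr p) = W powr (p - 1) * (\<Sum>d\<in>S'. w d * x d powr p)"
      using B by (simp add: mult.assoc)
    also have "\<dots> \<le> 1 * (\<Sum>d\<in>S'. w d * x d powr p)"
    proof (rule mult_right_mono)
      have "W powr (p - 1) \<le> 1 powr (p - 1)" by (rule powr_mono2) (use p Wpos W1' in auto)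
      then show "W powr (p - 1) \<le> 1" by simp
      show "0 \<le> (\<Sum>d\<in>S'. w d * x d powr p)" using w S'S by (auto intro!: sum_nonneg)
    qed
    finally show ?thesis using e2 by simp
  qed
qed

lemma jensen_inf:
  fixes w x :: "nat \<Rightarrow> real" and p :: real
  assumes w: "\<And>d. 0 \<le> w d" and x: "\<And>d. 0 \<le> x d" and W1: "\<And>D. (\<Sum>d<D. w d) \<le> 1"
    and p: "1 \<le> p" and s1: "summable (\<lambda>d. w d * x d)" and s2: "summable (\<lambda>d. w d * x d powr p)"
  shows "(\<Sum>d. w d * x d) powr p \<le> (\<Sum>d. w d * x d powr p)"
proof -
  have lim: "(\<lambda>D. (\<Sum>d<D. w d * x d) powr p) \<longlonglongrightarrow> (\<Sum>d. w d * x d) powr p"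
    by (rule tendsto_powr2[OF summable_LIMSEQ[OF s1] tendsto_const])
       (use w x p in \<open>auto intro!: always_eventually sum_nonneg\<close>)
  show ?thesis
  proof (rule LIMSEQ_le_const2[OF lim], intro exI allI impI)
    fix D :: nat
    have "(\<Sum>d<D. w d * x d) powr p \<le> (\<Sum>d<D. w d * x d powr p)"
      by (rule jensen_fin) (use w x W1 p in auto)
    also have "\<dots> \<le> (\<Sum>d. w d * x d powr p)"
      by (rule sum_le_suminf[OF s2]) (use w in auto)
    finally show "(\<Sum>d<D. w d * x d) powr p \<le> (\<Sum>d. w d * x d powr p)" .
  qed
qed

lemma hardy:
  fixes \<Theta> :: "nat \<Rightarrow> real" and p r :: real
  assumes p: "1 < p" and r: "r = (p - 1) / p" and nn: "\<And>k. 0 \<le> \<Theta> k"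
    and summ: "summable (\<lambda>k. (2 powr (real k * r) * \<Theta> k) powr p)"
  shows "summable \<Theta>"
    and "(\<Sum>j\<le>L. (2 powr (real j * r) * (\<Sum>d. \<Theta> (d + j))) powr p)
          \<le> (1 - 2 powr (-r)) powr (-p) * (\<Sum>k. (2 powr (real k * r) * \<Theta> k) powr p)"
proof -
  define \<theta> where "\<theta> k = 2 powr (real k * r) * \<Theta> k" for k
  define g where "g k = \<theta> k powr p" for k
  define q :: real where "q = 2 powr (-r)"
  define S where "S = (\<Sum>k. g k)"
  have rpos: "r > 0" using p r by simp
  have q0: "0 < q" by (simp add: q_def)
  have q1: "q < 1"
  proof -
    have "q < 2 powr 0" unfolding q_def by (rule powr_less_mono) (use rpos in auto)
    then show ?thesis by simp
  qed
  have \<theta>nn: "0 \<le> \<theta> k" for k using nn by (simp add: \<theta>_def)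
  have geq: "g = (\<lambda>k. (2 powr (real k * r) * \<Theta> k) powr p)" by (rule ext) (simp add: g_def \<theta>_def)
  have gs: "summable g" using summ by (simp add: geq)
  have gnn: "0 \<le> g k" for k by (simp add: g_def)
  have \<theta>le: "\<theta> k \<le> 1 + g k" for k
  proof (cases "\<theta> k \<le> 1")
    case True
    then show ?thesis using gnn[of k] by simp
  next
    case False
    then have "\<theta> k powr 1 \<le> \<theta> k powr p" by (intro powr_mono) (use p in auto)
    then show ?thesis using False by (simp add: g_def powr_one)
  qed
  have qpow: "q ^ k = 2 powr (- (r * real k))" for k
  proof -
    have "q ^ k = q powr real k" using q0 by (simp add: powr_realpow)
    also have "\<dots> = 2 powr (- (r * real k))" unfolding q_def powr_powr by simp
    finally show ?thesis .
  qed
  have key: "2 powr (real j * r) * \<Theta> (d + j) = q ^ d * \<theta> (d + j)" for d j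
  proof -
    have "q ^ d * \<theta> (d + j) = (2 powr (- (r * real d)) * 2 powr (real (d + j) * r)) * \<Theta> (d + j)"
      by (simp add: qpow \<theta>_def mult.assoc)
    also have "2 powr (- (r * real d)) * 2 powr (real (d + j) * r) = 2 powr (real j * r)"
      by (simp add: powr_add[symmetric] algebra_simps)
    finally show ?thesis by simp
  qed
  have \<Theta>eq: "\<Theta> k = q ^ k * \<theta> k" for k
    using key[where d=k and j=0] by simp
  have gsum: "summable (\<lambda>k. q ^ k + g k)"
    by (intro summable_add summable_geometric gs) (use q0 q1 in simp)
  have qth: "q ^ k * \<theta> m \<le> q ^ k + g m" for k m
  proof -
    have "q ^ k * \<theta> m \<le> q ^ k * (1 + g m)" by (rule mult_left_mono[OF \<theta>le]) (use q0 in simp)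
    also have "\<dots> = q ^ k + q ^ k * g m" by (simp add: algebra_simps)
    also have "q ^ k * g m \<le> 1 * g m" by (rule mult_right_mono) (use q0 q1 gnn in \<open>auto intro: power_le_one\<close>)
    finally show ?thesis by simp
  qed
  show \<Theta>s: "summable \<Theta>"
    by (rule summable_comparison_test'[OF gsum]) (use nn \<Theta>eq qth in auto)
  have bound_j: "(2 powr (real j * r) * (\<Sum>d. \<Theta> (d + j))) powr p
      \<le> (1 - q) powr (-p) * ((1 - q) * (\<Sum>d. q ^ d * g (d + j)))" for j
  proof -
    define w where "w d = (1 - q) * q ^ d" for d
    define x where "x d = \<theta> (d + j) / (1 - q)" for d
    have wx: "w d * x d = q ^ d * \<theta> (d + j)" for d using q1 by (simp add: w_def x_def)
    have wxp: "w d * x d powr p = (1 - q) powr (-p) * (1 - q) * (q ^ d * g (d + j))" for d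
      using q1 by (simp add: w_def x_def g_def powr_divide powr_minus divide_simps)
    have s1: "summable (\<lambda>d. q ^ d * \<theta> (d + j))"
    proof (rule summable_comparison_test'[where g = "\<lambda>d. q ^ d + g (d + j)"])
      show "summable (\<lambda>d. q ^ d + g (d + j))"
        by (intro summable_add summable_geometric summable_ignore_initial_segment[OF gs]) (use q0 q1 in simp)
      show "norm (q ^ d * \<theta> (d + j)) \<le> q ^ d + g (d + j)" for d
        using qth[of d "d + j"] q0 \<theta>nn[of "d + j"] by simp
    qed
    have s2': "summable (\<lambda>d. q ^ d * g (d + j))"
    proof (rule summable_comparison_test'[where g = "\<lambda>d. g (d + j)"])
      show "summable (\<lambda>d. g (d + j))" by (rule summable_ignore_initial_segment[OF gs])
      show "norm (q ^ d * g (d + j)) \<le> g (d + j)" for d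
        using q0 q1 gnn[of "d + j"] by (simp add: abs_mult mult_left_le_one_le power_le_one)
    qed
    have A: "2 powr (real j * r) * (\<Sum>d. \<Theta> (d + j)) = (\<Sum>d. w d * x d)"
      unfolding wx key[symmetric]
      by (rule suminf_mult[symmetric]) (rule summable_ignore_initial_segment[OF \<Theta>s])
    have "(\<Sum>d. w d * x d) powr p \<le> (\<Sum>d. w d * x d powr p)"
    proof (rule jensen_inf)
      show "0 \<le> w d" for d using q0 q1 by (simp add: w_def)
      show "0 \<le> x d" for d using q1 \<theta>nn by (simp add: x_def)
      show "(\<Sum>d<D. w d) \<le> 1" for D
      proof -
        have "(\<Sum>d<D. w d) = (1 - q) * (\<Sum>d<D. q ^ d)" by (simp add: w_def sum_distrib_left)
        also have "\<dots> = 1 - q ^ D" using q1 by (simp add: sum_gp_strict)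
        finally show ?thesis using q0 by simp
      qed
      show "1 \<le> p" using p by simp
      show "summable (\<lambda>d. w d * x d)" unfolding wx by (rule s1)
      show "summable (\<lambda>d. w d * x d powr p)" unfolding wxp by (intro summable_mult s2')
    qed
    also have "\<dots> = (1 - q) powr (-p) * ((1 - q) * (\<Sum>d. q ^ d * g (d + j)))"
      unfolding wxp using suminf_mult[OF s2', of "(1 - q) powr (-p) * (1 - q)"] by (simp add: mult.assoc)
    finally show ?thesis unfolding A .
  qed
  have inner: "(\<Sum>j\<le>L. g (d + j)) \<le> S" for d
  proof -
    have "(\<Sum>j\<le>L. g (d + j)) = sum g ((\<lambda>j. d + j) ` {..L})"
      by (subst sum.reindex) (auto simp: inj_on_def)
    also have "\<dots> \<le> S" unfolding S_def by (rule sum_le_suminf[OF gs]) (auto simp: gnn)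
    finally show ?thesis .
  qed
  have sj: "summable (\<lambda>d. q ^ d * g (d + j))" for j
    by (rule summable_comparison_test'[where g = "\<lambda>d. g (d + j)"])
       (use q0 q1 gnn summable_ignore_initial_segment[OF gs] in \<open>auto simp: abs_mult mult_left_le_one_le power_le_one\<close>)
  have "(\<Sum>j\<le>L. (\<Sum>d. q ^ d * g (d + j))) = (\<Sum>d. (\<Sum>j\<le>L. q ^ d * g (d + j)))"
    by (rule suminf_sum[symmetric]) (rule sj)
  also have "\<dots> \<le> (\<Sum>d. q ^ d * S)"
  proof (rule suminf_le)
    show "(\<Sum>j\<le>L. q ^ d * g (d + j)) \<le> q ^ d * S" for d
      using inner[of d] q0 by (simp add: sum_distrib_left[symmetric] mult_left_mono)
    show "summable (\<lambda>d. \<Sum>j\<le>L. q ^ d * g (d + j))" by (intro summable_sum sj)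
    show "summable (\<lambda>d. q ^ d * S)" by (intro summable_mult2 summable_geometric) (use q0 q1 in simp)
  qed
  also have "\<dots> = S / (1 - q)"
    using suminf_mult2[OF summable_geometric[of q], of S] suminf_geometric[of q] q0 q1 by simp
  finally have tot: "(\<Sum>j\<le>L. (\<Sum>d. q ^ d * g (d + j))) \<le> S / (1 - q)" .
  have "(\<Sum>j\<le>L. (2 powr (real j * r) * (\<Sum>d. \<Theta> (d + j))) powr p)
      \<le> (\<Sum>j\<le>L. (1 - q) powr (-p) * ((1 - q) * (\<Sum>d. q ^ d * g (d + j))))"
    by (rule sum_mono) (rule bound_j)
  also have "\<dots> = (1 - q) powr (-p) * (1 - q) * (\<Sum>j\<le>L. (\<Sum>d. q ^ d * g (d + j)))"
    by (simp add: sum_distrib_left mult.assoc)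
  also have "\<dots> \<le> (1 - q) powr (-p) * (1 - q) * (S / (1 - q))"
    by (rule mult_left_mono[OF tot]) (use q1 in simp)
  also have "\<dots> = (1 - q) powr (-p) * S" using q1 by simp
  finally show "(\<Sum>j\<le>L. (2 powr (real j * r) * (\<Sum>d. \<Theta> (d + j))) powr p)
          \<le> (1 - 2 powr (-r)) powr (-p) * (\<Sum>k. (2 powr (real k * r) * \<Theta> k) powr p)"
    by (simp add: q_def S_def geq)
qed

lemma pair_sum_eq:
  fixes h :: "nat \<Rightarrow> real"
  shows "(\<Sum>n<2 * M. h ((n + 1) div 2)) = 2 * (\<Sum>m<M. h m) - h 0 + h M"
proof (induction M)
  case 0
  then show ?case by simp
next
  case (Suc M)
  have "(\<Sum>n<2 * Suc M. h ((n + 1) div 2)) = (\<Sum>n<2 * M. h ((n + 1) div 2)) + h M + h (Suc M)"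
  proof -
    have e: "2 * Suc M = Suc (Suc (2 * M))" by simp
    have "(Suc (2 * M) + 1) div 2 = Suc M" "(2 * M + 1) div 2 = M" by presburger+
    then show ?thesis unfolding e by simp
  qed
  then show ?case using Suc by simp
qed

lemma pair_sum_bound:
  fixes h :: "nat \<Rightarrow> real"
  assumes h: "\<And>m. 0 \<le> h m"
  shows "(\<Sum>n<N. h ((n + 1) div 2)) \<le> 2 * (\<Sum>m<2 ^ N. h m)"
proof -
  have "(\<Sum>n<N. h ((n + 1) div 2)) \<le> (\<Sum>n<2 * N. h ((n + 1) div 2))"
    by (rule sum_mono2) (auto simp: h)
  also have "\<dots> = 2 * (\<Sum>m<N. h m) - h 0 + h N" by (rule pair_sum_eq)
  also have "\<dots> \<le> 2 * (\<Sum>m<Suc N. h m)" using h[of 0] h[of N] by simp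
  also have "(\<Sum>m<Suc N. h m) \<le> (\<Sum>m<2 ^ N. h m)"
  proof (rule sum_mono2)
    have "Suc N \<le> 2 ^ N" by (rule Suc_leI) (rule less_exp)
    then show "{..<Suc N} \<subseteq> {..<2 ^ N}" by (rule lessThan_subset_iff[THEN iffD2])
  qed (auto simp: h)
  finally show ?thesis by simp
qed

lemma block_decomp:
  fixes h :: "nat \<Rightarrow> real"
  shows "(\<Sum>m<2 ^ L. h m) = (\<Sum>j\<le>L. \<Sum>m\<in>{2 ^ j div 2..<2 ^ j}. h m)"
proof (induction L)
  case 0
  then show ?case by simp
next
  case (Suc L)
  have "(\<Sum>m<2 ^ Suc L. h m) = (\<Sum>m\<in>{0..<2 ^ L}. h m) + (\<Sum>m\<in>{2 ^ L..<2 ^ Suc L}. h m)"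
    by (subst sum.atLeastLessThan_concat) (auto simp: lessThan_atLeast0)
  also have "(\<Sum>m\<in>{0..<2 ^ L}. h m) = (\<Sum>m<2 ^ L. h m)" by (simp add: lessThan_atLeast0)
  finally show ?case using Suc by simp
qed

lemma powr_ratio:
  fixes x y s :: real
  assumes y: "0 < y" and xy: "y / 2 \<le> x" "x \<le> y"
  shows "x powr s \<le> 2 powr \<bar>s\<bar> * y powr s"
proof (cases "s \<ge> 0")
  case True
  have "x powr s \<le> y powr s" by (rule powr_mono2) (use True y xy in auto)
  also have "\<dots> \<le> 2 powr \<bar>s\<bar> * y powr s"
  proof -
    have "2 powr 0 \<le> 2 powr \<bar>s\<bar>" by (rule powr_mono) auto
    then have "1 * y powr s \<le> 2 powr \<bar>s\<bar> * y powr s" by (intro mult_right_mono) auto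
    then show ?thesis by simp
  qed
  finally show ?thesis .
next
  case False
  have "x powr s \<le> (y / 2) powr s" by (rule powr_mono2') (use False y xy in auto)
  also have "\<dots> = y powr s / 2 powr s" by (rule powr_divide)
  also have "\<dots> = 2 powr (- s) * y powr s" by (simp only: powr_minus_divide) simp
  finally show ?thesis using False by simp
qed

lemma block_sum_bound:
  fixes Bf :: "nat \<Rightarrow> real" and Tj p r :: real
  assumes B: "\<And>m. m \<in> {2 ^ j div 2..<2 ^ j} \<Longrightarrow> 0 \<le> Bf m \<and> Bf m \<le> Tj"
    and p: "1 < p" and r: "r = (p - 1) / p"
  shows "(\<Sum>m\<in>{2 ^ j div 2..<2 ^ j}. real (m + 1) powr (p - 2) * Bf m powr p)
      \<le> 2 powr \<bar>p - 2\<bar> * (2 powr (real j * r) * Tj) powr p"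
proof -
  define X where "X = 2 powr \<bar>p - 2\<bar> * (2 powr real j) powr (p - 2) * Tj powr p"
  have X0: "0 \<le> X" by (simp add: X_def)
  have y: "2 powr real j = real ((2::nat) ^ j)" by (simp add: powr_realpow)
  have tm: "real (m + 1) powr (p - 2) * Bf m powr p \<le> X" if m: "m \<in> {2 ^ j div 2..<2 ^ j}" for m
  proof -
    have "real (m + 1) powr (p - 2) \<le> 2 powr \<bar>p - 2\<bar> * (2 powr real j) powr (p - 2)"
    proof (rule powr_ratio)
      show "0 < 2 powr real j" by simp
      have "(2::nat) ^ j \<le> 2 * (m + 1)" using m by auto
      then have "real ((2::nat) ^ j) \<le> real (2 * (m + 1))" by (rule of_nat_mono)
      then show "2 powr real j / 2 \<le> real (m + 1)" unfolding y by simp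
      have "m + 1 \<le> (2::nat) ^ j" using m by auto
      then have "real (m + 1) \<le> real ((2::nat) ^ j)" by (rule of_nat_mono)
      then show "real (m + 1) \<le> 2 powr real j" unfolding y .
    qed
    moreover have "Bf m powr p \<le> Tj powr p" by (rule powr_mono2) (use p B[OF m] in auto)
    ultimately show ?thesis unfolding X_def by (intro mult_mono) auto
  qed
  have "(\<Sum>m\<in>{2 ^ j div 2..<2 ^ j}. real (m + 1) powr (p - 2) * Bf m powr p)
      \<le> (\<Sum>m\<in>{(2::nat) ^ j div 2..<2 ^ j}. X)" by (rule sum_mono) (rule tm)
  also have "\<dots> = real ((2::nat) ^ j - 2 ^ j div 2) * X" by simp
  also have "\<dots> \<le> real ((2::nat) ^ j) * X" by (rule mult_right_mono) (use X0 in auto)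
  also have "\<dots> = 2 powr \<bar>p - 2\<bar> * (2 powr (real j * r) * Tj) powr p"
  proof -
    have rp: "real j * r * p = real j * (p - 1)" using p by (simp add: r)
    have "(2 powr (real j * r) * Tj) powr p = (2 powr (real j * r)) powr p * Tj powr p"
      by (rule powr_mult)
    also have "(2 powr (real j * r)) powr p = 2 powr (real j * (p - 1))"
      unfolding powr_powr rp ..
    finally have A: "(2 powr (real j * r) * Tj) powr p = 2 powr (real j * (p - 1)) * Tj powr p" .
    have "real ((2::nat) ^ j) * (2 powr real j) powr (p - 2) = 2 powr real j * 2 powr (real j * (p - 2))"
      unfolding y[symmetric] powr_powr ..
    also have "\<dots> = 2 powr (real j + real j * (p - 2))" by (rule powr_add[symmetric])
    also have "real j + real j * (p - 2) = real j * (p - 1)" by (simp add: algebra_simps)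
    finally have B: "real ((2::nat) ^ j) * (2 powr real j) powr (p - 2) = 2 powr (real j * (p - 1))" .
    have "real ((2::nat) ^ j) * X = 2 powr \<bar>p - 2\<bar> * ((real ((2::nat) ^ j) * (2 powr real j) powr (p - 2)) * Tj powr p)"
      unfolding X_def by (simp only: mult_ac)
    then show ?thesis unfolding B A by (simp only: mult_ac)
  qed
  finally show ?thesis .
qed

theorem mainTheorem9:
  fixes p :: real
  assumes "1 < p"
  shows "\<exists>C>0. \<forall>f :: real \<Rightarrow> complex.
           set_integrable lborel {-pi..pi} f \<longrightarrow> J_p_star p f \<le> ennreal C * I_p p f"
proof -
  have p: "1 < p" by fact
  define r where "r = (p - 1) / p"
  define K where "K = (1 - 2 powr (-r)) powr (-p)"
  define c :: real where "c = 2 powr \<bar>p - 2\<bar>"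
  define C where "C = (2 * c * K) powr (1 / p)"
  have rpos: "r > 0" using p by (simp add: r_def)
  have q1: "2 powr (-r) < 1"
  proof -
    have "2 powr (-r) < 2 powr 0" by (rule powr_less_mono) (use rpos in auto)
    then show ?thesis by simp
  qed
  have K0: "K > 0" using q1 rpos by (simp add: K_def)
  have c0: "c > 0" by (simp add: c_def)
  have C0: "C > 0" using K0 c0 by (simp add: C_def)
  show ?thesis
  proof (intro exI[of _ C] conjI allI impI)
    show "C > 0" by (rule C0)
    fix f :: "real \<Rightarrow> complex"
    assume f: "set_integrable lborel {-pi..pi} f"
    define a where "a = fourier_coeff f"
    define \<Theta> where "\<Theta> = Theta a"
    define gI where "gI = (\<lambda>k. (2 powr (real k * r) * \<Theta> k) powr p)"
    have kr: "real k / conj_exp p = real k * r" for k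
      using p by (simp add: conj_exp_def r_def)
    have Ieq: "I_p p f = lp_root p gI"
      unfolding I_p_def gI_def \<Theta>_def a_def kr ..
    show "J_p_star p f \<le> ennreal C * I_p p f"
    proof (cases "summable gI")
      case False
      then have "I_p p f = top" by (simp add: Ieq lp_root_def)
      then show ?thesis using C0 by (simp add: ennreal_mult_top)
    next
      case True
      have nn: "\<And>k. 0 \<le> \<Theta> k" by (simp add: \<Theta>_def Theta_nonneg)
      have summ: "summable (\<lambda>k. (2 powr (real k * r) * \<Theta> k) powr p)" using True by (simp add: gI_def)
      have \<Theta>s: "summable \<Theta>" by (rule hardy(1)[OF p r_def nn summ])
      have HL: "(\<Sum>j\<le>L. (2 powr (real j * r) * (\<Sum>d. \<Theta> (d + j))) powr p) \<le> K * suminf gI" for L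
        using hardy(2)[OF p r_def nn summ, of L] by (simp add: K_def gI_def)
      define Tot where "Tot = suminf \<Theta>"
      have QT: "Qs a n \<le> Tot" for n
      proof -
        have "n \<le> 2 ^ Suc n div 2" using less_exp[of n] by simp
        then have "Qs a n \<le> Qs a (2 ^ Suc n div 2)" by (rule Qs_mono)
        also have "\<dots> = (\<Sum>i<Suc n. \<Theta> i)" unfolding \<Theta>_def by (rule Theta_partial[symmetric])
        also have "\<dots> \<le> Tot" unfolding Tot_def by (rule sum_le_suminf[OF \<Theta>s]) (auto simp: nn)
        finally show ?thesis .
      qed
      define B where "B m = Tot - Qs a m" for m
      have B0: "0 \<le> B m" for m using QT[of m] by (simp add: B_def)
      have Bmono: "B m' \<le> B m" if "m \<le> m'" for m m' using Qs_mono[OF that, of a] by (simp add: B_def)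
      have cb: "cmod (a k) \<le> B (nat \<bar>k\<bar>)" for k
        unfolding B_def a_def by (rule coeff_bound[OF f]) (use QT in \<open>simp add: a_def\<close>)
      have Tj: "(\<Sum>d. \<Theta> (d + j)) = Tot - Qs a (2 ^ j div 2)" for j
        unfolding Tot_def suminf_minus_initial_segment[OF \<Theta>s] by (simp add: \<Theta>_def Theta_partial)
      define h where "h m = real (m + 1) powr (p - 2) * B m powr p" for m
      define gJ where "gJ = (\<lambda>n. let k = sym_index n in
          (real_of_int (\<bar>k\<bar> + 1)) powr (p - 2) * (sym_rearr a k) powr p)"
      have Jeq: "J_p_star p f = lp_root p gJ" by (simp add: J_p_star_def gJ_def a_def)
      have gJ_le: "gJ n \<le> h ((n + 1) div 2)" for n
      proof -
        define m where "m = (n + 1) div 2"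
        have nm: "2 * m \<le> n + 1" unfolding m_def by presburger
        have D: "0 \<le> decr_rearr (\<lambda>j. cmod (a j)) n \<and> decr_rearr (\<lambda>j. cmod (a j)) n \<le> B m"
          by (rule decr_rearr_bound[where b = "\<lambda>j. cmod (a j)" and B = B, OF cb Bmono B0 nm])
        have ab: "real_of_int (\<bar>sym_index n\<bar> + 1) = real (m + 1)" unfolding sym_index_abs m_def by simp
        have "gJ n = real (m + 1) powr (p - 2) * decr_rearr (\<lambda>j. cmod (a j)) n powr p"
          unfolding gJ_def Let_def ab sym_rearr_index ..
        also have "\<dots> \<le> real (m + 1) powr (p - 2) * B m powr p"
          by (intro mult_left_mono powr_mono2) (use D p in auto)
        finally show ?thesis by (simp add: h_def m_def)
      qed
      have gJ0: "0 \<le> gJ n" for n by (simp add: gJ_def Let_def)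
      have h0: "0 \<le> h m" for m by (simp add: h_def)
      have blocks: "(\<Sum>m<2 ^ L. h m) \<le> c * (K * suminf gI)" for L
      proof -
        have "(\<Sum>m<2 ^ L. h m) = (\<Sum>j\<le>L. \<Sum>m\<in>{2 ^ j div 2..<2 ^ j}. h m)" by (rule block_decomp)
        also have "\<dots> \<le> (\<Sum>j\<le>L. c * (2 powr (real j * r) * (\<Sum>d. \<Theta> (d + j))) powr p)"
        proof (rule sum_mono)
          fix j
          have "(\<Sum>m\<in>{2 ^ j div 2..<2 ^ j}. real (m + 1) powr (p - 2) * B m powr p)
              \<le> 2 powr \<bar>p - 2\<bar> * (2 powr (real j * r) * (\<Sum>d. \<Theta> (d + j))) powr p"
          proof (rule block_sum_bound[OF _ p r_def])
            fix m assume m: "m \<in> {2 ^ j div 2..<(2::nat) ^ j}"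
            then have "Qs a (2 ^ j div 2) \<le> Qs a m" by (intro Qs_mono) auto
            then show "0 \<le> B m \<and> B m \<le> (\<Sum>d. \<Theta> (d + j))" using B0[of m] by (simp add: Tj B_def)
          qed
          then show "(\<Sum>m\<in>{2 ^ j div 2..<2 ^ j}. h m) \<le> c * (2 powr (real j * r) * (\<Sum>d. \<Theta> (d + j))) powr p"
            by (simp add: h_def c_def)
        qed
        also have "\<dots> = c * (\<Sum>j\<le>L. (2 powr (real j * r) * (\<Sum>d. \<Theta> (d + j))) powr p)"
          by (simp add: sum_distrib_left)
        also have "\<dots> \<le> c * (K * suminf gI)" by (rule mult_left_mono[OF HL]) (use c0 in simp)
        finally show ?thesis .
      qed
      have partial: "(\<Sum>n<N. gJ n) \<le> 2 * (c * (K * suminf gI))" for N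
      proof -
        have "(\<Sum>n<N. gJ n) \<le> (\<Sum>n<N. h ((n + 1) div 2))" by (rule sum_mono) (rule gJ_le)
        also have "\<dots> \<le> 2 * (\<Sum>m<2 ^ N. h m)" by (rule pair_sum_bound) (rule h0)
        also have "\<dots> \<le> 2 * (c * (K * suminf gI))" using blocks[of N] by simp
        finally show ?thesis .
      qed
      have sJ: "summable gJ" by (rule summableI_nonneg_bounded[OF gJ0 partial])
      have sumJ: "suminf gJ \<le> 2 * (c * (K * suminf gI))" by (rule suminf_le_const[OF sJ partial])
      have S0: "0 \<le> suminf gI" by (rule suminf_nonneg[OF True]) (simp add: gI_def)
      have J0: "0 \<le> suminf gJ" by (rule suminf_nonneg[OF sJ gJ0])
      have "J_p_star p f = ennreal (suminf gJ powr (1 / p))" by (simp add: Jeq lp_root_def sJ)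
      also have "\<dots> \<le> ennreal ((2 * (c * (K * suminf gI))) powr (1 / p))"
        by (intro ennreal_leI powr_mono2) (use p J0 sumJ in auto)
      also have "(2 * (c * (K * suminf gI))) powr (1 / p) = C * suminf gI powr (1 / p)"
        by (simp add: C_def powr_mult mult.assoc)
      also have "ennreal (C * suminf gI powr (1 / p)) = ennreal C * ennreal (suminf gI powr (1 / p))"
        by (rule ennreal_mult) (use C0 in auto)
      also have "ennreal (suminf gI powr (1 / p)) = I_p p f" by (simp add: Ieq lp_root_def True)
      finally show ?thesis .
    qed
  qed
qed

end
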